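(* For every integer $n\ge0$, the Zernike polynomials $Z^{n,0},\dots,Z^{n,n}$ satisfy the first-order system $$\frac{\partial Z^{n,n}}{\partial z}=0,\qquad \frac{\partial Z^{n,k}}{\partial \bar z}+\frac{\partial Z^{n,k-1}}{\partial z}=0\ \ (k=1,\dots,n),\qquad \frac{\partial Z^{n,0}}{\partial \bar z}=0,$$ and the boundary conditions $Z^{n,k}(t,\bar t)=(-1)^k t^{\,n-2k}$ for all $|t|=1$ and $k=0,1,\dots,n$.
   Context: Identify $\mathbb R^2$ with $\mathbb C$ via $z=x^1+ix^2$, $\bar z=x^1-ix^2$, and use $\frac{\partial}{\partial z}=\frac12\big(\frac{\partial}{\partial x^1}-i\frac{\partial}{\partial x^2}\big)$, $\frac{\partial}{\partial \bar z}=\frac12\big(\frac{\partial}{\partial x^1}+i\frac{\partial}{\partial x^2}\big)$. Zernike polynomials (in the paper's numbering) are defined for integers $n\ge 0$, $0\le k\le n$ by $$Z^{n,k}(z,\bar z)=\sum_{s=0}^{k}\binom{k}{s}\binom{n-k}{s}z^{n-k-s}(1-z\bar z)^s(-\bar z)^{k-s}\quad\text{for }0\le k\le [n/2],$$ and $Z^{n,k}=(-1)^n\,\overline{Z^{n,n-k}}$ for $[n/2]<k\le n$, where $[\cdot]$ is the integer part. *)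

theory Defs
  imports "HOL-Analysis.Analysis"
begin

definition dx1 :: "(complex \<Rightarrow> complex) \<Rightarrow> complex \<Rightarrow> complex" where
  "dx1 f z = vector_derivative (\<lambda>t::real. f (z + complex_of_real t)) (at 0)"

definition dx2 :: "(complex \<Rightarrow> complex) \<Rightarrow> complex \<Rightarrow> complex" where
  "dx2 f z = vector_derivative (\<lambda>t::real. f (z + \<i> * complex_of_real t)) (at 0)"

definition dz :: "(complex \<Rightarrow> complex) \<Rightarrow> complex \<Rightarrow> complex" where
  "dz f z = (dx1 f z - \<i> * dx2 f z) / 2"

definition dzbar :: "(complex \<Rightarrow> complex) \<Rightarrow> complex \<Rightarrow> complex" where
  "dzbar f z = (dx1 f z + \<i> * dx2 f z) / 2"

text \<open>Zernike polynomial Z^{n,k}(z, zbar) for 0 <= k <= [n/2], with zbar = cnj z.\<close>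
definition zernike_low :: "nat \<Rightarrow> nat \<Rightarrow> complex \<Rightarrow> complex" where
  "zernike_low n k z = (\<Sum>s=0..k. of_nat (k choose s) * of_nat ((n - k) choose s)
       * z ^ (n - k - s) * (1 - z * cnj z) ^ s * (- cnj z) ^ (k - s))"

definition zernike :: "nat \<Rightarrow> nat \<Rightarrow> complex \<Rightarrow> complex" where
  "zernike n k z = (if k \<le> n div 2 then zernike_low n k z
                    else (-1) ^ n * cnj (zernike_low n (n - k) z))"

end

theory Submission
  imports Defs
begin


definition wirt :: "(complex \<Rightarrow> complex) \<Rightarrow> complex \<Rightarrow> complex \<Rightarrow> complex \<Rightarrow> bool" where
  "wirt f z a b \<longleftrightarrow> (f has_derivative (\<lambda>h. a * h + b * cnj h)) (at z)"

lemma wirt_dx1: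
  assumes "wirt f z a b" shows "dx1 f z = a + b"
proof -
  have 1: "((\<lambda>t::real. z + complex_of_real t) has_derivative (\<lambda>t. complex_of_real t)) (at 0)"
    by (auto intro!: derivative_eq_intros)
  have 2: "(f has_derivative (\<lambda>h. a * h + b * cnj h)) (at (z + complex_of_real 0))"
    using assms by (simp add: wirt_def)
  have "((\<lambda>t::real. f (z + complex_of_real t)) has_derivative (\<lambda>t. a * complex_of_real t + b * cnj (complex_of_real t))) (at 0)"
    using has_derivative_compose[OF 1 2] by (simp add: o_def)
  hence "((\<lambda>t::real. f (z + complex_of_real t)) has_vector_derivative (a + b)) (at 0)"
    unfolding has_vector_derivative_def
    by (rule has_derivative_eq_rhs) (auto simp: algebra_simps scaleR_conv_of_real)
  thus ?thesis unfolding dx1_def by (rule vector_derivative_at)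
qed

lemma wirt_dx2:
  assumes "wirt f z a b" shows "dx2 f z = \<i> * a - \<i> * b"
proof -
  have 1: "((\<lambda>t::real. z + \<i> * complex_of_real t) has_derivative (\<lambda>t. \<i> * complex_of_real t)) (at 0)"
    by (auto intro!: derivative_eq_intros)
  have 2: "(f has_derivative (\<lambda>h. a * h + b * cnj h)) (at (z + \<i> * complex_of_real 0))"
    using assms by (simp add: wirt_def)
  have "((\<lambda>t::real. f (z + \<i> * complex_of_real t)) has_derivative (\<lambda>t. a * (\<i> * complex_of_real t) + b * cnj (\<i> * complex_of_real t))) (at 0)"
    using has_derivative_compose[OF 1 2] by (simp add: o_def)
  hence "((\<lambda>t::real. f (z + \<i> * complex_of_real t)) has_vector_derivative (\<i> * a - \<i> * b)) (at 0)"
    unfolding has_vector_derivative_def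
    by (rule has_derivative_eq_rhs) (auto simp: algebra_simps scaleR_conv_of_real)
  thus ?thesis unfolding dx2_def by (rule vector_derivative_at)
qed

lemma wirt_dz: "wirt f z a b \<Longrightarrow> dz f z = a"
  unfolding dz_def by (simp add: wirt_dx1 wirt_dx2 algebra_simps)

lemma wirt_dzbar: "wirt f z a b \<Longrightarrow> dzbar f z = b"
  unfolding dzbar_def by (simp add: wirt_dx1 wirt_dx2 algebra_simps)

lemma wirt_mono:
  "wirt (\<lambda>z. z ^ p * cnj z ^ q) z (of_nat p * z ^ (p - 1) * cnj z ^ q) (of_nat q * z ^ p * cnj z ^ (q - 1))"
  unfolding wirt_def
  by (auto intro!: derivative_eq_intros bounded_linear.has_derivative[OF bounded_linear_cnj] simp: algebra_simps)

lemma wirt_sum: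
  assumes "\<And>r. r \<in> S \<Longrightarrow> wirt (f r) z (a r) (b r)"
  shows "wirt (\<lambda>z. \<Sum>r\<in>S. f r z) z (\<Sum>r\<in>S. a r) (\<Sum>r\<in>S. b r)"
  using assms unfolding wirt_def
  by (auto intro!: has_derivative_eq_rhs[OF has_derivative_sum] simp: sum.distrib sum_distrib_right)

lemma wirt_cmult:
  assumes "wirt f z a b" shows "wirt (\<lambda>z. c * f z) z (c * a) (c * b)"
  using assms unfolding wirt_def
  by (auto intro!: derivative_eq_intros simp: algebra_simps)



lemma vand2: "(\<Sum>i\<le>K. (K choose i) * (m choose (i + r))) = (K + m) choose (K + r)"
proof -
  have "(K + m) choose (K + r) = (\<Sum>j\<le>K+r. (K choose j) * (m choose (K + r - j)))"
    by (rule vandermonde[symmetric])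
  also have "\<dots> = (\<Sum>j\<le>K. (K choose j) * (m choose (K + r - j)))"
    by (rule sum.mono_neutral_right) auto
  also have "\<dots> = (\<Sum>j=0..K. (K choose j) * (m choose (K + r - j)))"
    by (simp add: atMost_atLeast0)
  also have "\<dots> = (\<Sum>i=0..K. (K choose (K - i)) * (m choose (K + r - (K - i))))"
    by (subst sum.atLeastAtMost_rev) simp
  also have "\<dots> = (\<Sum>i=0..K. (K choose i) * (m choose (i + r)))"
  proof (intro sum.cong refl)
    fix i assume i: "i \<in> {0..K}"
    hence "K choose (K - i) = K choose i" by (simp add: binomial_symmetric[symmetric])
    moreover have "K + r - (K - i) = i + r" using i by auto
    ultimately show "(K choose (K - i)) * (m choose (K + r - (K - i))) = (K choose i) * (m choose (i + r))" by simp
  qed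
  finally show ?thesis by (simp add: atMost_atLeast0)
qed

lemma coef_id:
  assumes "r \<le> k"
  shows "(\<Sum>s\<le>k. (k choose s) * (m choose s) * (s choose r)) = (k choose r) * ((m + k - r) choose k)"
proof -
  have "(\<Sum>s\<le>k. (k choose s) * (m choose s) * (s choose r)) = (\<Sum>s\<in>{r..k}. (k choose s) * (m choose s) * (s choose r))"
    by (rule sum.mono_neutral_right) auto
  also have "\<dots> = (\<Sum>s\<in>{r..k}. (k choose r) * ((k - r) choose (s - r)) * (m choose s))"
  proof (intro sum.cong refl)
    fix s assume s: "s \<in> {r..k}"
    hence e: "(k choose s) * (s choose r) = (k choose r) * ((k - r) choose (s - r))" by (intro choose_mult) auto
    have "(k choose s) * (m choose s) * (s choose r) = ((k choose s) * (s choose r)) * (m choose s)" by (simp only: mult_ac)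
    also have "\<dots> = (k choose r) * ((k - r) choose (s - r)) * (m choose s)" by (simp only: e)
    finally show "(k choose s) * (m choose s) * (s choose r) = (k choose r) * ((k - r) choose (s - r)) * (m choose s)" .
  qed
  also have "\<dots> = (\<Sum>i\<in>{0..k-r}. (k choose r) * ((k - r) choose i) * (m choose (i + r)))"
  proof -
    have "{r..k} = {0+r..(k-r)+r}" using assms by simp
    thus ?thesis by (simp only: sum.shift_bounds_cl_nat_ivl add_diff_cancel_right')
  qed
  also have "\<dots> = (k choose r) * (\<Sum>i\<le>k-r. ((k - r) choose i) * (m choose (i + r)))"
    by (simp add: sum_distrib_left atMost_atLeast0 mult.assoc)
  also have "\<dots> = (k choose r) * ((k - r + m) choose (k - r + r))" by (simp add: vand2)
  finally show ?thesis using assms by (simp add: add.commute)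
qed

lemma Mc_deriv:
  assumes "1 \<le> k" "k \<le> n"
  shows "(k choose r) * ((n - r) choose k) * (k - r) = ((k - 1) choose r) * ((n - r) choose (k - 1)) * (n - (k - 1) - r)"
proof -
  have 1: "(k - r) * (k choose r) = k * ((k - 1) choose r)" by (rule binomial_absorb_comp)
  obtain j where j: "k = Suc j" using assms by (cases k) auto
  have 2: "k * ((n - r) choose k) = ((n - r) - j) * ((n - r) choose j)"
  proof (cases "n - r")
    case 0 thus ?thesis using j by simp
  next
    case (Suc M)
    thus ?thesis using j Suc_times_binomial[of j M] binomial_absorb_comp[of "Suc M" j] by simp
  qed
  have "(k choose r) * ((n - r) choose k) * (k - r) = ((k - 1) choose r) * (k * ((n - r) choose k))"
  proof -
    have "(k choose r) * ((n - r) choose k) * (k - r) = ((k - r) * (k choose r)) * ((n - r) choose k)" by (simp only: mult_ac)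
    also have "\<dots> = (k * ((k - 1) choose r)) * ((n - r) choose k)" by (simp only: 1)
    also have "\<dots> = ((k - 1) choose r) * (k * ((n - r) choose k))" by (simp only: mult_ac)
    finally show ?thesis .
  qed
  also have "\<dots> = ((k - 1) choose r) * ((n - r) choose (k - 1)) * (n - (k - 1) - r)"
  proof -
    have e1: "k - 1 = j" "n - (k - 1) - r = n - r - j" "n - r - j = n - j - r" using j by auto
    show ?thesis by (simp only: 2 e1 mult_ac)
  qed
  finally show ?thesis .
qed

lemma Mc_sym:
  assumes "k \<le> n"
  shows "((n - k) choose r) * ((n - r) choose (n - k)) = (k choose r) * ((n - r) choose k)"
proof (cases "r \<le> k \<and> r \<le> n - k")
  case True
  have "real (((n - k) choose r) * ((n - r) choose (n - k))) = real ((k choose r) * ((n - r) choose k))"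
  proof -
    have a: "n - r - (n - k) = k - r" "n - r - k = n - k - r" using True assms by auto
    have b1: "real ((n - k) choose r) = fact (n - k) / (fact r * fact (n - k - r))" using True by (simp add: binomial_fact)
    have b2: "real ((n - r) choose (n - k)) = fact (n - r) / (fact (n - k) * fact (k - r))" using binomial_fact[of "n-k" "n-r", where 'a=real] True assms a by (simp add: diff_le_mono2)
    have b3: "real (k choose r) = fact k / (fact r * fact (k - r))" using True by (simp add: binomial_fact)
    have knr: "k \<le> n - r" using True assms by linarith
    have b4: "real ((n - r) choose k) = fact (n - r) / (fact k * fact (n - k - r))" using binomial_fact[OF knr, where 'a=real] a by simp
    show ?thesis unfolding of_nat_mult b1 b2 b3 b4 by (simp add: divide_simps)
  qed
  thus ?thesis by (simp only: of_nat_eq_iff)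
next
  case False
  show ?thesis
  proof (cases "r \<le> k")
    case True
    hence "r > n - k" using False by auto
    moreover have "n - r < k" using assms True \<open>r > n - k\<close> by linarith
    ultimately show ?thesis by (simp add: binomial_eq_0)
  next
    case f2: False
    show ?thesis
    proof (cases "r \<le> n - k")
      case True
      hence "n - r < n - k" using f2 by linarith
      thus ?thesis using f2 by (simp add: binomial_eq_0)
    next
      case False thus ?thesis using f2 by (simp add: binomial_eq_0)
    qed
  qed
qed



definition Mc :: "nat \<Rightarrow> nat \<Rightarrow> nat \<Rightarrow> nat" where
  "Mc n k r = (k choose r) * ((n - r) choose k)"
definition Mt :: "nat \<Rightarrow> nat \<Rightarrow> nat \<Rightarrow> complex" where
  "Mt n k r = (-1) ^ (k + r) * of_nat (Mc n k r)"
definition M :: "nat \<Rightarrow> nat \<Rightarrow> complex \<Rightarrow> complex \<Rightarrow> complex" where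
  "M n k z w = (\<Sum>r=0..n. Mt n k r * (z ^ (n - k - r) * w ^ (k - r)))"
definition Mz :: "nat \<Rightarrow> nat \<Rightarrow> complex \<Rightarrow> complex \<Rightarrow> complex" where
  "Mz n k z w = (\<Sum>r=0..n. Mt n k r * (of_nat (n - k - r) * z ^ (n - k - r - 1) * w ^ (k - r)))"
definition Mw :: "nat \<Rightarrow> nat \<Rightarrow> complex \<Rightarrow> complex \<Rightarrow> complex" where
  "Mw n k z w = (\<Sum>r=0..n. Mt n k r * (of_nat (k - r) * z ^ (n - k - r) * w ^ (k - r - 1)))"

lemma wirt_M: "wirt (\<lambda>z. M n k z (cnj z)) z (Mz n k z (cnj z)) (Mw n k z (cnj z))"
  unfolding M_def Mz_def Mw_def
  by (intro wirt_sum wirt_cmult wirt_mono)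

lemma deriv_id:
  assumes "1 \<le> k" "k \<le> n"
  shows "Mw n k z w + Mz n (k - 1) z w = 0"
proof -
  have "Mw n k z w + Mz n (k - 1) z w = (\<Sum>r=0..n. Mt n k r * (of_nat (k - r) * z ^ (n - k - r) * w ^ (k - r - 1))
     + Mt n (k - 1) r * (of_nat (n - (k - 1) - r) * z ^ (n - (k - 1) - r - 1) * w ^ (k - 1 - r)))"
    unfolding Mw_def Mz_def by (simp add: sum.distrib)
  also have "\<dots> = 0"
  proof (intro sum.neutral ballI)
    fix r assume "r \<in> {0..n}"
    have e1: "n - (k - 1) - r - 1 = n - k - r" "k - 1 - r = k - r - 1" using assms by auto
    have e2: "k - 1 + r + 1 = k + r" using assms by auto
    have s: "(-1::complex) ^ (k + r) = - ((-1) ^ (k - 1 + r))"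
      by (simp flip: e2)
    have c: "of_nat (Mc n k r) * (of_nat (k - r) :: complex) = of_nat (Mc n (k - 1) r) * of_nat (n - (k - 1) - r)"
      unfolding Mc_def of_nat_mult[symmetric] using Mc_deriv[OF assms, of r] by simp
    have "Mt n k r * (of_nat (k - r) * z ^ (n - k - r) * w ^ (k - r - 1)) =
          - ((-1) ^ (k - 1 + r)) * (of_nat (Mc n k r) * of_nat (k - r)) * (z ^ (n - k - r) * w ^ (k - r - 1))"
      unfolding Mt_def s by (simp add: mult_ac)
    also have "\<dots> = - (Mt n (k - 1) r * (of_nat (n - (k - 1) - r) * z ^ (n - (k - 1) - r - 1) * w ^ (k - 1 - r)))"
      unfolding c Mt_def e1 by (simp add: mult_ac)
    finally show "Mt n k r * (of_nat (k - r) * z ^ (n - k - r) * w ^ (k - r - 1))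
     + Mt n (k - 1) r * (of_nat (n - (k - 1) - r) * z ^ (n - (k - 1) - r - 1) * w ^ (k - 1 - r)) = 0"
      by simp
  qed
  finally show ?thesis .
qed

lemma Mz_nn: "Mz n n z w = 0"
  unfolding Mz_def by simp

lemma Mw_n0: "Mw n 0 z w = 0"
  unfolding Mw_def by simp

lemma M_sym:
  assumes "k \<le> n"
  shows "(-1) ^ n * cnj (M n (n - k) z (cnj z)) = M n k z (cnj z)"
proof -
  have "(-1) ^ n * cnj (M n (n - k) z (cnj z)) =
     (\<Sum>r=0..n. (-1) ^ n * ((-1) ^ (n - k + r) * of_nat (Mc n (n - k) r) * (cnj z ^ (n - (n - k) - r) * z ^ (n - k - r))))"
    unfolding M_def Mt_def by (simp add: sum_distrib_left)
  also have "\<dots> = M n k z (cnj z)"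
    unfolding M_def
  proof (intro sum.cong refl)
    fix r assume "r \<in> {0..n}"
    have e: "n - (n - k) - r = k - r" using assms by auto
    have p: "n + (n - k + r) = 2 * (n - k) + (k + r)" using assms by auto
    have s: "(-1::complex) ^ n * (-1) ^ (n - k + r) = (-1) ^ (k + r)"
      unfolding power_add[symmetric] p by (simp add: power_add power_mult)
    have c: "Mc n (n - k) r = Mc n k r" unfolding Mc_def using Mc_sym[OF assms] by simp
    show "(-1) ^ n * ((-1) ^ (n - k + r) * of_nat (Mc n (n - k) r) * (cnj z ^ (n - (n - k) - r) * z ^ (n - k - r))) =
         Mt n k r * (z ^ (n - k - r) * cnj z ^ (k - r))"
      unfolding Mt_def e c s[symmetric] by (simp add: mult_ac)
  qed
  finally show ?thesis .
qed



definition Lw :: "nat \<Rightarrow> nat \<Rightarrow> complex \<Rightarrow> complex \<Rightarrow> complex" where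
  "Lw n k z w = (\<Sum>s=0..k. of_nat (k choose s) * of_nat ((n - k) choose s)
       * z ^ (n - k - s) * (1 - z * w) ^ s * (- w) ^ (k - s))"

lemma Lw_eq_M:
  assumes kn: "k \<le> n"
  shows "Lw n k z w = M n k z w"
proof -
  define m where "m = n - k"
  define T where "T s r = of_nat ((k choose s) * (m choose s) * (s choose r)) * ((-1::complex) ^ (k + r) * z ^ (m - r) * w ^ (k - r))" for s r
  have step: "of_nat (k choose s) * of_nat (m choose s) * z ^ (m - s) * (1 - z * w) ^ s * (- w) ^ (k - s)
       = (\<Sum>r\<le>k. T s r)" if s: "s \<le> k" for s
  proof -
    have b: "(1 - z * w) ^ s = (\<Sum>r\<le>s. of_nat (s choose r) * (- (z * w)) ^ (s - r))"
      using binomial_ring[of 1 "- (z * w)" s] by simp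
    have "of_nat (k choose s) * of_nat (m choose s) * z ^ (m - s) * (1 - z * w) ^ s * (- w) ^ (k - s)
        = (\<Sum>r\<le>s. of_nat (k choose s) * of_nat (m choose s) * of_nat (s choose r) * (z ^ (m - s) * (- (z * w)) ^ (s - r) * (- w) ^ (k - s)))"
      unfolding b by (simp add: sum_distrib_left sum_distrib_right mult_ac)
    also have "\<dots> = (\<Sum>r\<le>s. T s r)"
    proof (intro sum.cong refl)
      fix r assume r: "r \<in> {..s}"
      show "of_nat (k choose s) * of_nat (m choose s) * of_nat (s choose r) * (z ^ (m - s) * (- (z * w)) ^ (s - r) * (- w) ^ (k - s)) = T s r"
      proof (cases "s \<le> m")
        case True
        have e1: "z ^ (m - s) * z ^ (s - r) = z ^ (m - r)" using True r by (simp flip: power_add)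
        have e2: "w ^ (s - r) * w ^ (k - s) = w ^ (k - r)" using s r by (simp flip: power_add)
        have p: "(s - r) + (k - s) = 2 * 0 + (k - r)" "k + r = 2 * r + (k - r)" using s r by auto
        have e3: "(-1::complex) ^ (s - r) * (-1) ^ (k - s) = (-1) ^ (k + r)"
          unfolding power_add[symmetric] p by (simp add: power_add power_mult)
        have "z ^ (m - s) * (- (z * w)) ^ (s - r) * (- w) ^ (k - s) =
              ((-1) ^ (s - r) * (-1) ^ (k - s)) * (z ^ (m - s) * z ^ (s - r)) * (w ^ (s - r) * w ^ (k - s))"
          unfolding power_minus[of "z * w"] power_minus[of w] power_mult_distrib by (simp only: mult_ac)
        also have "\<dots> = (-1) ^ (k + r) * z ^ (m - r) * w ^ (k - r)" unfolding e1 e2 e3 by simp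
        finally show ?thesis unfolding T_def by (simp add: mult_ac)
      next
        case False thus ?thesis unfolding T_def by (simp add: binomial_eq_0)
      qed
    qed
    also have "\<dots> = (\<Sum>r\<le>k. T s r)"
      by (rule sum.mono_neutral_left) (auto simp: T_def binomial_eq_0 s)
    finally show ?thesis .
  qed
  have "Lw n k z w = (\<Sum>s\<le>k. \<Sum>r\<le>k. T s r)"
    unfolding Lw_def m_def[symmetric] atMost_atLeast0[symmetric] by (intro sum.cong refl step) auto
  also have "\<dots> = (\<Sum>r\<le>k. \<Sum>s\<le>k. T s r)" by (rule sum.swap)
  also have "\<dots> = (\<Sum>r\<le>k. Mt n k r * (z ^ (n - k - r) * w ^ (k - r)))"
  proof (intro sum.cong refl)
    fix r assume r: "r \<in> {..k}"
    have "(\<Sum>s\<le>k. T s r) = of_nat (\<Sum>s\<le>k. (k choose s) * (m choose s) * (s choose r)) * ((-1::complex) ^ (k + r) * z ^ (m - r) * w ^ (k - r))"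
      unfolding T_def by (simp add: sum_distrib_right)
    also have "\<dots> = of_nat ((k choose r) * ((m + k - r) choose k)) * ((-1::complex) ^ (k + r) * z ^ (m - r) * w ^ (k - r))"
      using coef_id[of r k m] r by simp
    also have "\<dots> = Mt n k r * (z ^ (n - k - r) * w ^ (k - r))"
      unfolding Mt_def Mc_def m_def using kn r by (simp add: mult_ac)
    finally show "(\<Sum>s\<le>k. T s r) = Mt n k r * (z ^ (n - k - r) * w ^ (k - r))" .
  qed
  also have "\<dots> = M n k z w"
    unfolding M_def atMost_atLeast0 using kn
    by (intro sum.mono_neutral_left) (auto simp: Mt_def Mc_def binomial_eq_0)
  finally show ?thesis .
qed



lemma zernike_M:
  assumes "k \<le> n"
  shows "zernike n k = (\<lambda>z. M n k z (cnj z))"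
proof
  fix z
  show "zernike n k z = M n k z (cnj z)"
  proof (cases "k \<le> n div 2")
    case True
    have "zernike n k z = Lw n k z (cnj z)" using True unfolding zernike_def zernike_low_def Lw_def by simp
    thus ?thesis using Lw_eq_M[OF assms] by simp
  next
    case False
    have "zernike n k z = (-1) ^ n * cnj (Lw n (n - k) z (cnj z))" using False unfolding zernike_def zernike_low_def Lw_def by simp
    also have "\<dots> = (-1) ^ n * cnj (M n (n - k) z (cnj z))" using Lw_eq_M[of "n - k" n] by simp
    also have "\<dots> = M n k z (cnj z)" by (rule M_sym[OF assms])
    finally show ?thesis .
  qed
qed

lemma low_bd:
  assumes "cmod t = 1" "j \<le> n"
  shows "zernike_low n j t = (-1) ^ j * t ^ (n - j) * cnj t ^ j"
proof -
  have tc: "1 - t * cnj t = 0" using complex_norm_square[of t] assms by simp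
  have "zernike_low n j t = of_nat (j choose 0) * of_nat ((n - j) choose 0) * t ^ (n - j - 0) * (1 - t * cnj t) ^ 0 * (- cnj t) ^ (j - 0)
     + (\<Sum>s=Suc 0..j. of_nat (j choose s) * of_nat ((n - j) choose s) * t ^ (n - j - s) * (1 - t * cnj t) ^ s * (- cnj t) ^ (j - s))"
    unfolding zernike_low_def by (rule sum.atLeast_Suc_atMost) simp
  also have "(\<Sum>s=Suc 0..j. of_nat (j choose s) * of_nat ((n - j) choose s) * t ^ (n - j - s) * (1 - t * cnj t) ^ s * (- cnj t) ^ (j - s)) = 0"
    unfolding tc by (intro sum.neutral) auto
  finally show ?thesis by (simp add: power_minus[of "cnj t"])
qed


lemma bd:
  assumes t: "cmod t = 1" and k: "k \<le> n"
  shows "zernike n k t = (-1) ^ k * t powi (int n - 2 * int k)"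
proof -
  have t0: "t \<noteq> 0" using t by auto
  have tc: "t * cnj t = 1" using complex_norm_square[of t] t by simp
  have ci: "cnj t = inverse t" using inverse_unique[OF tc] by simp
  have pw: "t powi (int n - 2 * int k) = t ^ (n - k) * cnj t ^ k"
  proof -
    have e: "int n - 2 * int k = int (n - k) - int k" using k by simp
    have "t powi (int n - 2 * int k) = t powi int (n - k) / t powi int k"
      unfolding e using t0 by (intro power_int_diff) simp
    also have "\<dots> = t ^ (n - k) / t ^ k" by (simp only: power_int_of_nat)
    also have "\<dots> = t ^ (n - k) * cnj t ^ k" by (simp only: ci divide_inverse power_inverse)
    finally show ?thesis .
  qed
  show ?thesis
  proof (cases "k \<le> n div 2")
    case True
    hence "zernike n k t = zernike_low n k t" unfolding zernike_def by simp
    also have "\<dots> = (-1) ^ k * t ^ (n - k) * cnj t ^ k" by (rule low_bd[OF t k])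
    finally show ?thesis unfolding pw by (simp only: mult.assoc)
  next
    case False
    have nk: "n - (n - k) = k" using k by simp
    have "zernike n k t = (-1) ^ n * cnj (zernike_low n (n - k) t)"
      using False unfolding zernike_def by simp
    also have "\<dots> = (-1) ^ n * cnj ((-1) ^ (n - k) * t ^ k * cnj t ^ (n - k))"
      using low_bd[OF t, of "n - k" n] nk by simp
    also have "\<dots> = ((-1) ^ n * (-1) ^ (n - k)) * (t ^ (n - k) * cnj t ^ k)"
      by (simp only: complex_cnj_mult complex_cnj_power complex_cnj_cnj complex_cnj_minus complex_cnj_one mult_ac)
    also have "(-1::complex) ^ n * (-1) ^ (n - k) = (-1) ^ k"
    proof -
      have p: "n + (n - k) = 2 * (n - k) + k" using k by simp
      show ?thesis unfolding power_add[symmetric] p by (simp add: power_add power_mult)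
    qed
    finally show ?thesis unfolding pw by (simp only: mult.assoc)
  qed
qed

theorem theorem1:
  fixes n :: nat
  shows "(\<forall>z. dz (zernike n n) z = 0)
       \<and> (\<forall>k\<in>{1..n}. \<forall>z. dzbar (zernike n k) z + dz (zernike n (k - 1)) z = 0)
       \<and> (\<forall>z. dzbar (zernike n 0) z = 0)
       \<and> (\<forall>k\<in>{0..n}. \<forall>t::complex. cmod t = 1 \<longrightarrow>
             zernike n k t = (-1) ^ k * t powi (int n - 2 * int k))"
proof (intro conjI ballI allI impI)
  fix z
  show "dz (zernike n n) z = 0"
    unfolding zernike_M[OF order_refl] wirt_dz[OF wirt_M] by (rule Mz_nn)
next
  fix k z assume k: "k \<in> {1..n}"
  hence k1: "k \<le> n" "k - 1 \<le> n" by auto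
  show "dzbar (zernike n k) z + dz (zernike n (k - 1)) z = 0"
    unfolding zernike_M[OF k1(1)] zernike_M[OF k1(2)] wirt_dz[OF wirt_M] wirt_dzbar[OF wirt_M]
    using deriv_id k by auto
next
  fix z
  show "dzbar (zernike n 0) z = 0"
    unfolding zernike_M[OF le0] wirt_dzbar[OF wirt_M] by (rule Mw_n0)
next
  fix k t assume "k \<in> {0..n}" "cmod (t::complex) = 1"
  thus "zernike n k t = (-1) ^ k * t powi (int n - 2 * int k)" using bd by auto
qed

end
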